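(* Let $s\ge 0$ and $n\ge 0$. The $R/\mathfrak{h}_s$-module $\mathcal{P}_{s,n}$ admits a filtration by $R/\mathfrak{h}_s$-submodules $0=F_0\subset F_1\subset\cdots\subset F_{(s+1)^n}=\mathcal{P}_{s,n}$ such that $F_i/F_{i-1}\cong \mathcal{Q}_{s,n}$ for each $1\le i\le (s+1)^n$.
   Context: Let $k$ be a field. Let $\mathfrak{S}=\bigcup_{n\ge1}\mathfrak{S}_n$ be the group of finitary permutations of $\{1,2,\dots\}$ and $\mathfrak{S}(n)$ the subgroup fixing $1,\dots,n$; a representation of $\mathfrak{S}$ is smooth if every vector is fixed by some $\mathfrak{S}(n)$. Let $R=k[x_1,x_2,\dots]$ with $\mathfrak{S}$ permuting the variables, and $\mathfrak{h}_s$ the ideal generated by all $x_i^{s+1}$. An $R/\mathfrak{h}_s$-module means a module over $R/\mathfrak{h}_s$ equipped with a smooth $\mathfrak{S}$-action compatible with the action on $R/\mathfrak{h}_s$ ($\sigma(am)=\sigma(a)\sigma(m)$); submodules and isomorphisms are required to be $\mathfrak{S}$-equivariant. $\mathcal{P}_{s,n}$ is the free $R/\mathfrak{h}_s$-module with basis $e_{i_1,\dots,i_n}$ indexed by $n$-tuples of distinct positive integers, with $\sigma e_{i_1,\dots,i_n}=e_{\sigma(i_1),\dots,\sigma(i_n)}$. $\mathcal{Q}_{s,n}$ is the quotient of $\mathcal{P}_{s,n}$ by the submodule generated by all $x_i e_{i_1,\dots,i_n}$ with $i\in\{i_1,\dots,i_n\}$. *)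

theory Defs
  imports Main
begin

text \<open>A k-basis of R/h_s is given by monomials x^alpha with
alpha : positive integers -> nat finitely supported and alpha i <= s.
P_{s,n} is free over R/h_s with basis e_t, t an n-tuple of distinct positive
integers, so a k-basis of P_{s,n} is the set of pairs (alpha, t).
Elements of P_{s,n} are finitely supported coefficient functions on such pairs.
Index 0 is not a variable (variables are x_1, x_2, ...).\<close>

type_synonym 'k vec = "((nat \<Rightarrow> nat) \<times> nat list) \<Rightarrow> 'k"

definition valid_mono :: "nat \<Rightarrow> (nat \<Rightarrow> nat) \<Rightarrow> bool" where
  "valid_mono s \<alpha> \<longleftrightarrow> \<alpha> 0 = 0 \<and> finite {i. \<alpha> i \<noteq> 0} \<and> (\<forall>i. \<alpha> i \<le> s)"

definition valid_tuple :: "nat \<Rightarrow> nat list \<Rightarrow> bool" where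
  "valid_tuple n t \<longleftrightarrow> length t = n \<and> distinct t \<and> 0 \<notin> set t"

definition Pcarrier :: "nat \<Rightarrow> nat \<Rightarrow> ('k::zero) vec set" where
  "Pcarrier s n = {v. finite {p. v p \<noteq> 0} \<and>
      (\<forall>\<alpha> t. v (\<alpha>, t) \<noteq> 0 \<longrightarrow> valid_mono s \<alpha> \<and> valid_tuple n t)}"

text \<open>Multiplication by the variable x_j (j >= 1) on P_{s,n}; uses x_j^(s+1) = 0.\<close>
definition xmul :: "nat \<Rightarrow> nat \<Rightarrow> ('k::zero) vec \<Rightarrow> 'k vec" where
  "xmul s j v = (\<lambda>(\<alpha>, t). if 1 \<le> \<alpha> j \<and> \<alpha> j \<le> s then v (\<alpha>(j := \<alpha> j - 1), t) else 0)"

definition finperm :: "(nat \<Rightarrow> nat) \<Rightarrow> bool" where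
  "finperm \<sigma> \<longleftrightarrow> bij \<sigma> \<and> \<sigma> 0 = 0 \<and> finite {i. \<sigma> i \<noteq> i}"

text \<open>Action: sigma (c x^alpha e_t) = c x^(alpha o sigma^-1) e_(sigma t).\<close>
definition pact :: "(nat \<Rightarrow> nat) \<Rightarrow> 'k vec \<Rightarrow> 'k vec" where
  "pact \<sigma> v = (\<lambda>(\<beta>, u). v (\<beta> \<circ> \<sigma>, map (inv \<sigma>) u))"

text \<open>(S-equivariant) R/h_s-submodules of P_{s,n}: k-subspaces stable under all x_j
and all finitary permutations.  (Smoothness is automatic inside P_{s,n}.)\<close>
definition is_submod :: "nat \<Rightarrow> nat \<Rightarrow> ('k::field) vec set \<Rightarrow> bool" where
  "is_submod s n M \<longleftrightarrow> M \<subseteq> Pcarrier s n \<and> (\<lambda>_. 0) \<in> M \<and>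
     (\<forall>v\<in>M. \<forall>w\<in>M. \<forall>a b::'k. (\<lambda>p. a * v p + b * w p) \<in> M) \<and>
     (\<forall>j\<ge>1. \<forall>v\<in>M. xmul s j v \<in> M) \<and>
     (\<forall>\<sigma>. finperm \<sigma> \<longrightarrow> (\<forall>v\<in>M. pact \<sigma> v \<in> M))"

definition ebasis :: "(nat \<Rightarrow> nat) \<times> nat list \<Rightarrow> ('k::{zero,one}) vec" where
  "ebasis p = (\<lambda>q. if q = p then 1 else 0)"

definition Qgens :: "nat \<Rightarrow> nat \<Rightarrow> ('k::{zero,one}) vec set" where
  "Qgens s n = {xmul s i (ebasis ((\<lambda>_. 0), t)) | i t. valid_tuple n t \<and> i \<in> set t}"

text \<open>The submodule generated by the generators; Q_{s,n} = P_{s,n} / Nsub s n.\<close>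
definition Nsub :: "nat \<Rightarrow> nat \<Rightarrow> ('k::field) vec set" where
  "Nsub s n = \<Inter> {M. is_submod s n M \<and> Qgens s n \<subseteq> M}"

text \<open>A / B is isomorphic (as R/h_s-module with S-action) to Q_{s,n} = P_{s,n}/Nsub:
there is a map phi from A to P_{s,n} which, composed with the projection to
Q_{s,n}, is k-linear, x_j-linear, S-equivariant, surjective, with kernel B.\<close>
definition iso_to_Q :: "nat \<Rightarrow> nat \<Rightarrow> ('k::field) vec set \<Rightarrow> 'k vec set \<Rightarrow> bool" where
  "iso_to_Q s n A B \<longleftrightarrow> (\<exists>\<phi> :: 'k vec \<Rightarrow> 'k vec.
     (\<forall>v\<in>A. \<phi> v \<in> Pcarrier s n) \<and>
     (\<forall>v\<in>A. \<forall>w\<in>A. \<forall>a b::'k.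
        (\<lambda>p. \<phi> (\<lambda>q. a * v q + b * w q) p - (a * \<phi> v p + b * \<phi> w p)) \<in> Nsub s n) \<and>
     (\<forall>j\<ge>1. \<forall>v\<in>A. (\<lambda>p. \<phi> (xmul s j v) p - xmul s j (\<phi> v) p) \<in> Nsub s n) \<and>
     (\<forall>\<sigma>. finperm \<sigma> \<longrightarrow> (\<forall>v\<in>A. (\<lambda>p. \<phi> (pact \<sigma> v) p - pact \<sigma> (\<phi> v) p) \<in> Nsub s n)) \<and>
     (\<forall>u\<in>Pcarrier s n. \<exists>v\<in>A. (\<lambda>p. \<phi> v p - u p) \<in> Nsub s n) \<and>
     (\<forall>v\<in>A. \<phi> v \<in> Nsub s n \<longleftrightarrow> v \<in> B))"

end

theory Submission
  imports Defs
begin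

lemma digsum_bound:
  fixes b :: nat
  assumes "\<forall>k<n. d k < b"
  shows "(\<Sum>k<n. d k * b ^ k) < b ^ n"
  using assms
proof (induction n)
  case 0 then show ?case by simp
next
  case (Suc n)
  have "(\<Sum>k<Suc n. d k * b ^ k) = (\<Sum>k<n. d k * b ^ k) + d n * b ^ n" by simp
  also have "\<dots> < b ^ n + d n * b ^ n" using Suc by simp
  also have "\<dots> \<le> b ^ Suc n"
  proof -
    have "d n + 1 \<le> b" using Suc.prems by (simp add: Suc_le_eq)
    then have "(d n + 1) * b ^ n \<le> b * b ^ n" by (rule mult_right_mono) simp
    then show ?thesis by (simp add: algebra_simps)
  qed
  finally show ?case .
qed

lemma digsum_mod:
  fixes b :: nat
  shows "(\<Sum>k<n. (x div b ^ k mod b) * b ^ k) = x mod b ^ n"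
proof (induction n)
  case 0 then show ?case by simp
next
  case (Suc n)
  have "x mod b ^ Suc n = x mod (b ^ n * b)" by (simp add: mult.commute)
  also have "\<dots> = b ^ n * (x div b ^ n mod b) + x mod b ^ n" by (rule mod_mult2_eq)
  finally show ?case using Suc by (simp add: algebra_simps)
qed

lemma digsum_id:
  fixes b :: nat
  assumes "x < b ^ n"
  shows "(\<Sum>k<n. (x div b ^ k mod b) * b ^ k) = x"
  by (metis digsum_mod assms mod_less)

lemma digsum_digit:
  fixes b :: nat
  assumes "\<forall>k<n. d k < b" "j < n"
  shows "(\<Sum>k<n. d k * b ^ k) div b ^ j mod b = d j"
  using assms
proof (induction n arbitrary: d j)
  case 0 then show ?case by simp
next
  case (Suc n)
  have b: "b > 0" using Suc.prems by auto
  have eq: "(\<Sum>k<Suc n. d k * b ^ k) = d 0 + b * (\<Sum>k<n. d (Suc k) * b ^ k)"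
    unfolding sum.lessThan_Suc_shift by (simp add: sum_distrib_left algebra_simps)
  have d0: "d 0 < b" using Suc.prems by auto
  show ?case
  proof (cases j)
    case 0
    then show ?thesis using eq d0 by simp
  next
    case (Suc j')
    have "(\<Sum>k<Suc n. d k * b ^ k) div b = (\<Sum>k<n. d (Suc k) * b ^ k)"
      using eq d0 b by simp
    then have "(\<Sum>k<Suc n. d k * b ^ k) div b ^ j = (\<Sum>k<n. d (Suc k) * b ^ k) div b ^ j'"
      using Suc by (simp add: div_mult2_eq)
    moreover have "(\<Sum>k<n. d (Suc k) * b ^ k) div b ^ j' mod b = d (Suc j')"
      using Suc.IH[of "\<lambda>k. d (Suc k)" j'] Suc.prems Suc by auto
    ultimately show ?thesis using Suc by simp
  qed
qed

lemma P_zero: "(\<lambda>_. 0) \<in> Pcarrier s n"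
  by (simp add: Pcarrier_def)

lemma P_lin:
  fixes v w :: "('k::field) vec"
  assumes "v \<in> Pcarrier s n" "w \<in> Pcarrier s n"
  shows "(\<lambda>p. a * v p + b * w p) \<in> Pcarrier s n"
proof -
  have "{p. a * v p + b * w p \<noteq> 0} \<subseteq> {p. v p \<noteq> 0} \<union> {p. w p \<noteq> 0}" by auto
  then have "finite {p. a * v p + b * w p \<noteq> 0}"
    using assms unfolding Pcarrier_def by (auto intro: finite_subset)
  moreover have "\<forall>\<alpha> t. a * v (\<alpha>, t) + b * w (\<alpha>, t) \<noteq> 0 \<longrightarrow> valid_mono s \<alpha> \<and> valid_tuple n t"
  proof (intro allI impI)
    fix \<alpha> t assume "a * v (\<alpha>, t) + b * w (\<alpha>, t) \<noteq> 0"
    then have "v (\<alpha>, t) \<noteq> 0 \<or> w (\<alpha>, t) \<noteq> 0" by auto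
    then show "valid_mono s \<alpha> \<and> valid_tuple n t" using assms unfolding Pcarrier_def by blast
  qed
  ultimately show ?thesis unfolding Pcarrier_def by blast
qed

lemma valid_mono_upd:
  assumes "valid_mono s (\<alpha>(j := \<alpha> j - 1))" "j \<ge> 1" "\<alpha> j \<le> s"
  shows "valid_mono s \<alpha>"
proof -
  have sub: "{i. \<alpha> i \<noteq> 0} \<subseteq> insert j {i. (\<alpha>(j := \<alpha> j - 1)) i \<noteq> 0}" by auto
  have fin: "finite {i. \<alpha> i \<noteq> 0}"
    by (rule finite_subset[OF sub]) (use assms(1) in \<open>simp add: valid_mono_def\<close>)
  have z: "\<alpha> 0 = 0" using assms(1,2) unfolding valid_mono_def by (simp split: if_splits)
  have bd: "\<forall>i. \<alpha> i \<le> s"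
  proof
    fix i show "\<alpha> i \<le> s"
    proof (cases "i = j")
      case True then show ?thesis using assms(3) by simp
    next
      case False
      then have "(\<alpha>(j := \<alpha> j - 1)) i = \<alpha> i" by simp
      then show ?thesis using assms(1) unfolding valid_mono_def by metis
    qed
  qed
  show ?thesis using fin z bd unfolding valid_mono_def by blast
qed

lemma P_xmul:
  fixes v :: "('k::field) vec"
  assumes "v \<in> Pcarrier s n" "j \<ge> 1"
  shows "xmul s j v \<in> Pcarrier s n"
proof -
  let ?f = "\<lambda>(\<alpha>::nat\<Rightarrow>nat, t::nat list). (\<alpha>(j := Suc (\<alpha> j)), t)"
  have "{p. xmul s j v p \<noteq> 0} \<subseteq> ?f ` {p. v p \<noteq> 0}"
  proof
    fix p assume "p \<in> {p. xmul s j v p \<noteq> 0}"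
    then obtain \<alpha> t where p: "p = (\<alpha>, t)" and h: "1 \<le> \<alpha> j" "\<alpha> j \<le> s" "v (\<alpha>(j := \<alpha> j - 1), t) \<noteq> 0"
      by (cases p) (auto simp: xmul_def split: if_splits)
    have "?f (\<alpha>(j := \<alpha> j - 1), t) = p" using h p by auto
    then show "p \<in> ?f ` {p. v p \<noteq> 0}" using h by (metis (mono_tags) image_eqI mem_Collect_eq)
  qed
  then have "finite {p. xmul s j v p \<noteq> 0}"
    using assms unfolding Pcarrier_def by (auto intro: finite_subset)
  moreover have "\<forall>\<alpha> t. xmul s j v (\<alpha>, t) \<noteq> 0 \<longrightarrow> valid_mono s \<alpha> \<and> valid_tuple n t"
  proof (intro allI impI)
    fix \<alpha> t assume "xmul s j v (\<alpha>, t) \<noteq> 0"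
    then have h: "1 \<le> \<alpha> j" "\<alpha> j \<le> s" "v (\<alpha>(j := \<alpha> j - 1), t) \<noteq> 0"
      by (auto simp: xmul_def split: if_splits)
    then have "valid_mono s (\<alpha>(j := \<alpha> j - 1)) \<and> valid_tuple n t"
      using assms unfolding Pcarrier_def by blast
    then show "valid_mono s \<alpha> \<and> valid_tuple n t" using valid_mono_upd h assms by blast
  qed
  ultimately show ?thesis unfolding Pcarrier_def by blast
qed

lemma finperm_facts:
  assumes "finperm \<sigma>"
  shows "\<And>x. \<sigma> (inv \<sigma> x) = x" "\<And>x. inv \<sigma> (\<sigma> x) = x" "\<sigma> 0 = 0" "inv \<sigma> 0 = 0"
proof -
  have b: "bij \<sigma>" and z: "\<sigma> 0 = 0" using assms unfolding finperm_def by auto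
  show "\<And>x. \<sigma> (inv \<sigma> x) = x" using surj_f_inv_f[OF bij_is_surj[OF b]] by blast
  show "\<And>x. inv \<sigma> (\<sigma> x) = x" using inv_f_f[OF bij_is_inj[OF b]] by blast
  show "\<sigma> 0 = 0" by (rule z)
  show "inv \<sigma> 0 = 0" using inv_f_eq[OF bij_is_inj[OF b] z] .
qed

lemma valid_mono_perm:
  assumes "finperm \<sigma>" "valid_mono s (\<beta> \<circ> \<sigma>)"
  shows "valid_mono s \<beta>"
proof -
  note f = finperm_facts[OF assms(1)]
  have "{i. \<beta> i \<noteq> 0} \<subseteq> \<sigma> ` {i. \<beta> (\<sigma> i) \<noteq> 0}"
  proof
    fix i assume "i \<in> {i. \<beta> i \<noteq> 0}"
    then have "\<beta> (\<sigma> (inv \<sigma> i)) \<noteq> 0" using f(1) by simp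
    then show "i \<in> \<sigma> ` {i. \<beta> (\<sigma> i) \<noteq> 0}" using f(1)[of i] by (metis (mono_tags) image_eqI mem_Collect_eq)
  qed
  moreover have "finite {i. (\<beta> \<circ> \<sigma>) i \<noteq> 0}" using assms(2) unfolding valid_mono_def by blast
  ultimately have fin: "finite {i. \<beta> i \<noteq> 0}" by (simp add: finite_subset)
  have z: "\<beta> 0 = 0" using assms(2) f(3) unfolding valid_mono_def by simp
  have bd: "\<forall>i. \<beta> i \<le> s"
  proof
    fix i have "(\<beta> \<circ> \<sigma>) (inv \<sigma> i) \<le> s" using assms(2) unfolding valid_mono_def by blast
    then show "\<beta> i \<le> s" using f(1) by simp
  qed
  show ?thesis using fin z bd unfolding valid_mono_def by blast
qed

lemma valid_tuple_perm:
  assumes "finperm \<sigma>" "valid_tuple n (map (inv \<sigma>) u)"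
  shows "valid_tuple n u"
proof -
  note f = finperm_facts[OF assms(1)]
  have "0 \<notin> set u"
  proof
    assume "0 \<in> set u" then have "inv \<sigma> 0 \<in> set (map (inv \<sigma>) u)" by auto
    then show False using assms(2) f unfolding valid_tuple_def by simp
  qed
  then show ?thesis using assms(2) unfolding valid_tuple_def by (auto simp: distinct_map)
qed

lemma P_pact:
  fixes v :: "('k::field) vec"
  assumes "v \<in> Pcarrier s n" "finperm \<sigma>"
  shows "pact \<sigma> v \<in> Pcarrier s n"
proof -
  note f = finperm_facts[OF assms(2)]
  let ?f = "\<lambda>(\<alpha>::nat\<Rightarrow>nat, t::nat list). (\<alpha> \<circ> inv \<sigma>, map \<sigma> t)"
  have "{p. pact \<sigma> v p \<noteq> 0} \<subseteq> ?f ` {p. v p \<noteq> 0}"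
  proof
    fix p assume "p \<in> {p. pact \<sigma> v p \<noteq> 0}"
    then obtain \<beta> u where p: "p = (\<beta>, u)" and h: "v (\<beta> \<circ> \<sigma>, map (inv \<sigma>) u) \<noteq> 0"
      by (cases p) (auto simp: pact_def)
    have "?f (\<beta> \<circ> \<sigma>, map (inv \<sigma>) u) = p" using p f by (auto simp: comp_def map_idI)
    then show "p \<in> ?f ` {p. v p \<noteq> 0}" using h by (metis (mono_tags) image_eqI mem_Collect_eq)
  qed
  then have "finite {p. pact \<sigma> v p \<noteq> 0}"
    using assms unfolding Pcarrier_def by (auto intro: finite_subset)
  moreover have "\<forall>\<alpha> t. pact \<sigma> v (\<alpha>, t) \<noteq> 0 \<longrightarrow> valid_mono s \<alpha> \<and> valid_tuple n t"
  proof (intro allI impI)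
    fix \<alpha> t assume "pact \<sigma> v (\<alpha>, t) \<noteq> 0"
    then have "v (\<alpha> \<circ> \<sigma>, map (inv \<sigma>) t) \<noteq> 0" by (simp add: pact_def)
    then have "valid_mono s (\<alpha> \<circ> \<sigma>) \<and> valid_tuple n (map (inv \<sigma>) t)"
      using assms unfolding Pcarrier_def by blast
    then show "valid_mono s \<alpha> \<and> valid_tuple n t"
      using valid_mono_perm valid_tuple_perm assms by blast
  qed
  ultimately show ?thesis unfolding Pcarrier_def by blast
qed

lemma submod_pred:
  assumes xstep: "\<And>\<alpha> t j. j \<ge> 1 \<Longrightarrow> 1 \<le> \<alpha> j \<Longrightarrow> \<alpha> j \<le> s \<Longrightarrow> G (\<alpha>(j := \<alpha> j - 1)) t \<Longrightarrow> G \<alpha> t"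
    and perm: "\<And>\<sigma> \<beta> u. finperm \<sigma> \<Longrightarrow> G (\<beta> \<circ> \<sigma>) (map (inv \<sigma>) u) \<Longrightarrow> G \<beta> u"
  shows "is_submod s n {v :: ('k::field) vec. v \<in> Pcarrier s n \<and> (\<forall>\<alpha> t. v (\<alpha>, t) \<noteq> 0 \<longrightarrow> G \<alpha> t)}"
proof -
  define M where "M = {v :: 'k vec. v \<in> Pcarrier s n \<and> (\<forall>\<alpha> t. v (\<alpha>, t) \<noteq> 0 \<longrightarrow> G \<alpha> t)}"
  have memI: "v \<in> M" if "v \<in> Pcarrier s n" "\<And>\<alpha> t. v (\<alpha>, t) \<noteq> 0 \<Longrightarrow> G \<alpha> t" for v
    using that unfolding M_def by blast
  have memP: "v \<in> Pcarrier s n" if "v \<in> M" for v using that unfolding M_def by blast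
  have memG: "G \<alpha> t" if "v \<in> M" "v (\<alpha>, t) \<noteq> 0" for v \<alpha> t using that unfolding M_def by blast
  have 1: "M \<subseteq> Pcarrier s n" using memP by blast
  have 2: "(\<lambda>_. 0) \<in> M" by (rule memI) (auto simp: P_zero)
  have 3: "(\<lambda>p. a * v p + b * w p) \<in> M" if "v \<in> M" "w \<in> M" for v w a b
  proof (rule memI)
    show "(\<lambda>p. a * v p + b * w p) \<in> Pcarrier s n" using P_lin memP that by blast
    fix \<alpha> t assume "a * v (\<alpha>, t) + b * w (\<alpha>, t) \<noteq> 0"
    then have "v (\<alpha>, t) \<noteq> 0 \<or> w (\<alpha>, t) \<noteq> 0" by auto
    then show "G \<alpha> t" using memG that by metis
  qed
  have 4: "xmul s j v \<in> M" if j: "1 \<le> j" and v: "v \<in> M" for j v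
  proof (rule memI)
    show "xmul s j v \<in> Pcarrier s n" using P_xmul memP j v by blast
    fix \<alpha> t assume "xmul s j v (\<alpha>, t) \<noteq> 0"
    then have h: "1 \<le> \<alpha> j" "\<alpha> j \<le> s" "v (\<alpha>(j := \<alpha> j - 1), t) \<noteq> 0"
      by (auto simp: xmul_def split: if_splits)
    have "G (\<alpha>(j := \<alpha> j - 1)) t" by (rule memG[OF v h(3)])
    then show "G \<alpha> t" using xstep[of j \<alpha> t] j h(1) h(2) by blast
  qed
  have 5: "pact \<sigma> v \<in> M" if s: "finperm \<sigma>" and v: "v \<in> M" for \<sigma> v
  proof (rule memI)
    show "pact \<sigma> v \<in> Pcarrier s n" using P_pact memP s v by blast
    fix \<alpha> t assume "pact \<sigma> v (\<alpha>, t) \<noteq> 0"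
    then have "v (\<alpha> \<circ> \<sigma>, map (inv \<sigma>) t) \<noteq> 0" by (simp add: pact_def)
    then have "G (\<alpha> \<circ> \<sigma>) (map (inv \<sigma>) t)" by (rule memG[OF v])
    then show "G \<alpha> t" by (rule perm[OF s])
  qed
  have "is_submod s n M" unfolding is_submod_def using 1 2 3 4 5 by blast
  then show ?thesis unfolding M_def .
qed

definition goodM :: "(nat \<Rightarrow> nat) \<Rightarrow> nat list \<Rightarrow> bool" where
  "goodM \<alpha> t \<longleftrightarrow> (\<exists>j\<in>set t. 1 \<le> \<alpha> j)"

definition Mset :: "nat \<Rightarrow> nat \<Rightarrow> ('k::field) vec set" where
  "Mset s n = {v. v \<in> Pcarrier s n \<and> (\<forall>\<alpha> t. v (\<alpha>, t) \<noteq> 0 \<longrightarrow> goodM \<alpha> t)}"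

lemma Mset_submod: "is_submod s n (Mset s n :: ('k::field) vec set)"
  unfolding Mset_def
proof (rule submod_pred)
  fix \<alpha> :: "nat \<Rightarrow> nat" and t j
  assume "1 \<le> \<alpha> j" "goodM (\<alpha>(j := \<alpha> j - 1)) t"
  then show "goodM \<alpha> t" unfolding goodM_def
    by (metis fun_upd_apply le_diff_conv le_add1 order_trans)
next
  fix \<sigma> :: "nat \<Rightarrow> nat" and \<beta> u
  assume s: "finperm \<sigma>" and g: "goodM (\<beta> \<circ> \<sigma>) (map (inv \<sigma>) u)"
  note f = finperm_facts[OF s]
  from g obtain k where "k \<in> set (map (inv \<sigma>) u)" "1 \<le> \<beta> (\<sigma> k)" unfolding goodM_def by auto
  then obtain u' where "u' \<in> set u" "k = inv \<sigma> u'" by auto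
  then show "goodM \<beta> u" unfolding goodM_def using \<open>1 \<le> \<beta> (\<sigma> k)\<close> f(1) by auto
qed

lemma ebasis_P:
  assumes "valid_mono s \<beta>" "valid_tuple n t"
  shows "(ebasis (\<beta>, t) :: ('k::field) vec) \<in> Pcarrier s n"
proof -
  have "{p. (ebasis (\<beta>, t) :: 'k vec) p \<noteq> 0} = {(\<beta>, t)}" by (auto simp: ebasis_def)
  then show ?thesis using assms unfolding Pcarrier_def by (auto simp: ebasis_def split: if_splits)
qed

lemma valid_mono_zero: "valid_mono s (\<lambda>_. 0)" by (simp add: valid_mono_def)

lemma Qgens_Mset: "Qgens s n \<subseteq> (Mset s n :: ('k::field) vec set)"
proof
  fix v :: "'k vec" assume "v \<in> Qgens s n"
  then obtain i t where v: "v = xmul s i (ebasis ((\<lambda>_. 0), t))" and t: "valid_tuple n t" "i \<in> set t"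
    unfolding Qgens_def by blast
  have i: "1 \<le> i" using t unfolding valid_tuple_def by (cases i) auto
  have P: "v \<in> Pcarrier s n" using v P_xmul[OF ebasis_P[OF valid_mono_zero t(1)] i] by simp
  have "goodM \<alpha> t'" if "v (\<alpha>, t') \<noteq> 0" for \<alpha> t'
  proof -
    from that have "1 \<le> \<alpha> i" "t' = t" by (auto simp: v xmul_def ebasis_def split: if_splits)
    then show ?thesis using t(2) unfolding goodM_def by blast
  qed
  then show "v \<in> Mset s n" using P unfolding Mset_def by blast
qed

lemma Nsub_upper: "Nsub s n \<subseteq> (Mset s n :: ('k::field) vec set)"
  unfolding Nsub_def using Mset_submod Qgens_Mset by blast

lemma xmul_ebasis:
  assumes "\<gamma> k < s"
  shows "xmul s k (ebasis (\<gamma>, t)) = (ebasis (\<gamma>(k := Suc (\<gamma> k)), t) :: ('k::field) vec)"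
proof (rule ext)
  fix p :: "(nat \<Rightarrow> nat) \<times> nat list"
  obtain \<alpha> t' where p: "p = (\<alpha>, t')" by (cases p)
  have "((1 \<le> \<alpha> k \<and> \<alpha> k \<le> s) \<and> \<alpha>(k := \<alpha> k - 1) = \<gamma>) \<longleftrightarrow> \<alpha> = \<gamma>(k := Suc (\<gamma> k))"
  proof
    assume h: "(1 \<le> \<alpha> k \<and> \<alpha> k \<le> s) \<and> \<alpha>(k := \<alpha> k - 1) = \<gamma>"
    show "\<alpha> = \<gamma>(k := Suc (\<gamma> k))"
    proof (rule ext)
      fix i show "\<alpha> i = (\<gamma>(k := Suc (\<gamma> k))) i"
        using h fun_cong[OF conjunct2[OF h], of i] fun_cong[OF conjunct2[OF h], of k]
        by (cases "i = k") auto
    qed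
  next
    assume h: "\<alpha> = \<gamma>(k := Suc (\<gamma> k))"
    show "(1 \<le> \<alpha> k \<and> \<alpha> k \<le> s) \<and> \<alpha>(k := \<alpha> k - 1) = \<gamma>"
      using assms by (auto simp: h)
  qed
  then show "xmul s k (ebasis (\<gamma>, t)) p = (ebasis (\<gamma>(k := Suc (\<gamma> k)), t) :: 'k vec) p"
    unfolding p xmul_def ebasis_def by auto
qed

definition deg :: "(nat \<Rightarrow> nat) \<Rightarrow> nat" where
  "deg \<beta> = sum \<beta> {i. \<beta> i \<noteq> 0}"

lemma deg_dec:
  assumes "finite {i. \<beta> i \<noteq> 0}" "1 \<le> \<beta> k"
  shows "deg (\<beta>(k := \<beta> k - 1)) < deg \<beta>"
proof -
  let ?S = "{i. \<beta> i \<noteq> 0}" and ?b = "\<beta>(k := \<beta> k - 1)"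
  have "deg ?b = sum ?b ?S"
    unfolding deg_def by (rule sum.mono_neutral_left) (use assms(1) in \<open>auto split: if_splits\<close>)
  also have "\<dots> < sum \<beta> ?S"
    by (rule sum_strict_mono_ex1) (use assms in auto)
  finally show ?thesis unfolding deg_def .
qed

lemma ebasis_in_N:
  assumes N: "is_submod s n (N :: ('k::field) vec set)" "Qgens s n \<subseteq> N"
  shows "valid_mono s \<beta> \<Longrightarrow> valid_tuple n t \<Longrightarrow> goodM \<beta> t \<Longrightarrow> ebasis (\<beta>, t) \<in> N"
proof (induction "deg \<beta>" arbitrary: \<beta> rule: less_induct)
  case less
  have vm: "\<beta> 0 = 0" "finite {i. \<beta> i \<noteq> 0}" "\<And>i. \<beta> i \<le> s" using less.prems(1) unfolding valid_mono_def by auto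
  have xcl: "xmul s k w \<in> N" if "1 \<le> k" "w \<in> N" for k w using N(1) that unfolding is_submod_def by blast
  show ?case
  proof (cases "\<exists>k. 1 \<le> \<beta> k \<and> goodM (\<beta>(k := \<beta> k - 1)) t")
    case True
    then obtain k where k: "1 \<le> \<beta> k" "goodM (\<beta>(k := \<beta> k - 1)) t" by blast
    let ?b = "\<beta>(k := \<beta> k - 1)"
    have k1: "1 \<le> k" using k vm by (cases k) auto
    have vb: "valid_mono s ?b"
    proof -
      have sub: "{i. ?b i \<noteq> 0} \<subseteq> {i. \<beta> i \<noteq> 0}" by auto
      have fin: "finite {i. ?b i \<noteq> 0}" by (rule finite_subset[OF sub vm(2)])
      have z: "?b 0 = 0" using vm(1) by simp
      have bd: "\<forall>i. ?b i \<le> s"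
      proof
        fix i show "?b i \<le> s" using vm(3)[of i] vm(3)[of k] by auto
      qed
      show ?thesis using fin z bd unfolding valid_mono_def by blast
    qed
    have "(ebasis (?b, t) :: 'k vec) \<in> N" using less.hyps[OF deg_dec[OF vm(2) k(1)] vb less.prems(2) k(2)] .
    then have "xmul s k (ebasis (?b, t)) \<in> N" using xcl k1 by blast
    moreover have "?b k < s" using k(1) vm(3)[of k] by simp
    moreover have "?b(k := Suc (?b k)) = \<beta>" using k(1) by auto
    ultimately have "xmul s k (ebasis (?b, t)) = (ebasis (\<beta>, t) :: 'k vec)"
      using xmul_ebasis[of ?b k s t] by simp
    then show ?thesis using \<open>xmul s k (ebasis (?b, t)) \<in> N\<close> by simp
  next
    case False
    obtain j where j: "j \<in> set t" "1 \<le> \<beta> j" using less.prems(3) unfolding goodM_def by blast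
    have bj: "\<beta> j = 1"
    proof (rule ccontr)
      assume "\<beta> j \<noteq> 1"
      then have "1 \<le> (\<beta>(j := \<beta> j - 1)) j" using j by simp
      then have "goodM (\<beta>(j := \<beta> j - 1)) t" using j(1) unfolding goodM_def by blast
      then show False using False j by blast
    qed
    have bi: "\<beta> i = 0" if "i \<noteq> j" for i
    proof (rule ccontr)
      assume "\<beta> i \<noteq> 0"
      then have i1: "1 \<le> \<beta> i" by simp
      have "1 \<le> (\<beta>(i := \<beta> i - 1)) j" using j that by simp
      then have "goodM (\<beta>(i := \<beta> i - 1)) t" using j(1) unfolding goodM_def by blast
      then show False using False i1 by blast
    qed
    have beq: "\<beta> = (\<lambda>_. 0)(j := Suc ((\<lambda>_. (0::nat)) j))"
      using bj bi by (auto simp: fun_eq_iff)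
    have "0 < s" using vm(3)[of j] bj by simp
    then have "xmul s j (ebasis ((\<lambda>_. 0), t)) = (ebasis (\<beta>, t) :: 'k vec)"
      using xmul_ebasis[of "\<lambda>_. 0" j s t] beq by simp
    moreover have "xmul s j (ebasis ((\<lambda>_. 0), t)) \<in> Qgens s n"
      unfolding Qgens_def using less.prems(2) j(1) by blast
    ultimately show ?thesis using N(2) by auto
  qed
qed

lemma Mset_mono:
  assumes "v \<in> Mset s n" "\<And>q. w q \<noteq> 0 \<Longrightarrow> v q \<noteq> 0"
  shows "(w :: ('k::field) vec) \<in> Mset s n"
proof -
  have sub: "{q. w q \<noteq> 0} \<subseteq> {q. v q \<noteq> 0}" using assms(2) by blast
  have "finite {q. v q \<noteq> 0}" using assms(1) unfolding Mset_def Pcarrier_def by blast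
  then have fin: "finite {q. w q \<noteq> 0}" using sub finite_subset by blast
  have "\<forall>\<alpha> t. w (\<alpha>, t) \<noteq> 0 \<longrightarrow> (valid_mono s \<alpha> \<and> valid_tuple n t) \<and> goodM \<alpha> t"
  proof (intro allI impI)
    fix \<alpha> t assume "w (\<alpha>, t) \<noteq> 0"
    then have "v (\<alpha>, t) \<noteq> 0" using assms(2) by blast
    then show "(valid_mono s \<alpha> \<and> valid_tuple n t) \<and> goodM \<alpha> t"
      using assms(1) unfolding Mset_def Pcarrier_def by blast
  qed
  then show ?thesis using fin unfolding Mset_def Pcarrier_def by blast
qed

lemma Mset_in_N:
  assumes N: "is_submod s n (N :: ('k::field) vec set)" "Qgens s n \<subseteq> N"
  shows "v \<in> Mset s n \<Longrightarrow> v \<in> N"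
proof -
  have "\<And>v. finite S \<Longrightarrow> {p. v p \<noteq> 0} \<subseteq> S \<Longrightarrow> v \<in> Mset s n \<Longrightarrow> v \<in> N" for S
  proof -
    fix v :: "'k vec"
    assume "finite S" "{p. v p \<noteq> 0} \<subseteq> S" "v \<in> Mset s n"
    then show "v \<in> N"
    proof (induction S arbitrary: v rule: finite_induct)
      case empty
      then have "v = (\<lambda>_. 0)" by auto
      then show ?case using N(1) unfolding is_submod_def by simp
    next
      case (insert p S)
      let ?v = "v(p := 0)"
      have vM: "?v \<in> Mset s n" by (rule Mset_mono[OF insert.prems(2)]) (auto split: if_splits)
      have "{q. ?v q \<noteq> 0} \<subseteq> S" using insert.prems(1) by auto
      then have vN: "?v \<in> N" using insert.IH vM by blast
      show ?case
      proof (cases "v p = 0")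
        case True
        then have "?v = v" by auto
        then show ?thesis using vN by simp
      next
        case False
        obtain \<beta> t where p: "p = (\<beta>, t)" by (cases p)
        have "valid_mono s \<beta> \<and> valid_tuple n t" "goodM \<beta> t"
          using insert.prems(2) False p unfolding Mset_def Pcarrier_def by auto
        then have eN: "ebasis p \<in> N" using ebasis_in_N[OF N] p by blast
        have "(\<lambda>q. 1 * ?v q + v p * ebasis p q) \<in> N"
          using N(1) vN eN unfolding is_submod_def by blast
        moreover have "(\<lambda>q. 1 * ?v q + v p * ebasis p q) = v"
          by (auto simp: ebasis_def)
        ultimately show ?thesis by simp
      qed
    qed
  qed
  moreover assume "v \<in> Mset s n"
  moreover then have "finite {p. v p \<noteq> 0}" unfolding Mset_def Pcarrier_def by blast
  ultimately show "v \<in> N" by blast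
qed

lemma Nsub_lower: "v \<in> Mset s n \<Longrightarrow> (v :: ('k::field) vec) \<in> Nsub s n"
  unfolding Nsub_def using Mset_in_N by blast

lemma Nsub_eq: "Nsub s n = (Mset s n :: ('k::field) vec set)"
  using Nsub_lower Nsub_upper by blast

definition rk :: "nat \<Rightarrow> nat \<Rightarrow> nat list \<Rightarrow> (nat \<Rightarrow> nat) \<Rightarrow> nat" where
  "rk s n t \<alpha> = (\<Sum>k<n. (s - \<alpha> (t ! k)) * (s + 1) ^ k)"

definition dig :: "nat \<Rightarrow> nat \<Rightarrow> nat \<Rightarrow> nat" where
  "dig s x k = s - (x div (s + 1) ^ k mod (s + 1))"

definition liftc :: "nat \<Rightarrow> nat \<Rightarrow> nat \<Rightarrow> nat list \<Rightarrow> (nat \<Rightarrow> nat) \<Rightarrow> nat \<Rightarrow> nat" where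
  "liftc s n x t \<beta> = (\<lambda>j. \<beta> j + (\<Sum>k<n. if t ! k = j then dig s x k else 0))"

definition strip :: "nat list \<Rightarrow> (nat \<Rightarrow> nat) \<Rightarrow> nat \<Rightarrow> nat" where
  "strip t \<alpha> = (\<lambda>j. if j \<in> set t then 0 else \<alpha> j)"

definition Fil :: "nat \<Rightarrow> nat \<Rightarrow> nat \<Rightarrow> ('k::field) vec set" where
  "Fil s n i = {v. v \<in> Pcarrier s n \<and> (\<forall>\<alpha> t. v (\<alpha>, t) \<noteq> 0 \<longrightarrow> (length t = n \<longrightarrow> rk s n t \<alpha> < i))}"

definition phi :: "nat \<Rightarrow> nat \<Rightarrow> nat \<Rightarrow> ('k::field) vec \<Rightarrow> 'k vec" where
  "phi s n x v = (\<lambda>(\<beta>, t). if valid_tuple n t \<and> (\<forall>k<n. \<beta> (t ! k) = 0) then v (liftc s n x t \<beta>, t) else 0)"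

lemma dig_le: "dig s x k \<le> s" by (simp add: dig_def)

lemma rk_bound:
  assumes "\<forall>k<n. \<alpha> (t ! k) \<le> s"
  shows "rk s n t \<alpha> < (s + 1) ^ n"
  unfolding rk_def by (rule digsum_bound) (use assms in auto)

lemma rk_digits:
  assumes "\<forall>k<n. \<alpha> (t ! k) \<le> s" "rk s n t \<alpha> = x" "k < n"
  shows "\<alpha> (t ! k) = dig s x k"
proof -
  have "x div (s + 1) ^ k mod (s + 1) = s - \<alpha> (t ! k)"
  proof -
    have "\<forall>k<n. s - \<alpha> (t ! k) < s + 1" by auto
    then show ?thesis using digsum_digit[of n "\<lambda>k. s - \<alpha> (t ! k)" "s + 1" k] assms unfolding rk_def by simp
  qed
  then show ?thesis unfolding dig_def using assms(1,3) by auto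
qed

lemma rk_dig:
  assumes "\<forall>k<n. \<alpha> (t ! k) = dig s x k" "x < (s + 1) ^ n"
  shows "rk s n t \<alpha> = x"
proof -
  have "rk s n t \<alpha> = (\<Sum>k<n. (x div (s + 1) ^ k mod (s + 1)) * (s + 1) ^ k)"
    unfolding rk_def
  proof (rule sum.cong)
    fix k assume "k \<in> {..<n}"
    then have "\<alpha> (t ! k) = dig s x k" using assms by auto
    moreover have "x div (s + 1) ^ k mod (s + 1) \<le> s"
      using mod_less_divisor[of "s+1" "x div (s + 1) ^ k"] by linarith
    ultimately show "(s - \<alpha> (t ! k)) * (s + 1) ^ k = (x div (s + 1) ^ k mod (s + 1)) * (s + 1) ^ k"
      unfolding dig_def by simp
  qed simp
  also have "\<dots> = x" by (rule digsum_id[OF assms(2)])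
  finally show ?thesis .
qed

lemma lift_nth:
  assumes "distinct t" "length t = n" "k < n"
  shows "liftc s n x t \<beta> (t ! k) = \<beta> (t ! k) + dig s x k"
proof -
  have "(\<Sum>k'<n. if t ! k' = t ! k then dig s x k' else 0) = (\<Sum>k'<n. if k' = k then dig s x k' else 0)"
    by (rule sum.cong) (use assms in \<open>auto simp: nth_eq_iff_index_eq\<close>)
  also have "\<dots> = dig s x k" using assms(3) by simp
  finally show ?thesis unfolding liftc_def by simp
qed

lemma lift_out:
  assumes "j \<notin> set t" "length t = n"
  shows "liftc s n x t \<beta> j = \<beta> j"
proof -
  have "(\<Sum>k<n. if t ! k = j then dig s x k else 0) = 0"
    by (rule sum.neutral) (use assms in \<open>auto\<close>)
  then show ?thesis unfolding liftc_def by simp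
qed

lemma strip_lift:
  assumes "length t = n" "\<forall>k<n. \<beta> (t ! k) = 0"
  shows "strip t (liftc s n x t \<beta>) = \<beta>"
proof (rule ext)
  fix j show "strip t (liftc s n x t \<beta>) j = \<beta> j"
  proof (cases "j \<in> set t")
    case True
    then obtain k where "k < n" "j = t ! k" using assms(1) by (auto simp: in_set_conv_nth)
    then show ?thesis using True assms unfolding strip_def by simp
  next
    case False then show ?thesis using lift_out[OF False assms(1)] unfolding strip_def by simp
  qed
qed

lemma lift_strip:
  assumes "distinct t" "length t = n" "\<forall>k<n. \<alpha> (t ! k) = dig s x k"
  shows "liftc s n x t (strip t \<alpha>) = \<alpha>"
proof (rule ext)
  fix j show "liftc s n x t (strip t \<alpha>) j = \<alpha> j"
  proof (cases "j \<in> set t")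
    case True
    then obtain k where k: "k < n" "j = t ! k" using assms(2) by (auto simp: in_set_conv_nth)
    then show ?thesis using True assms lift_nth[OF assms(1,2) k(1)] unfolding strip_def by simp
  next
    case False then show ?thesis using lift_out[OF False assms(2)] unfolding strip_def by simp
  qed
qed

lemma rk_lift:
  assumes "distinct t" "length t = n" "\<forall>k<n. \<beta> (t ! k) = 0" "x < (s + 1) ^ n"
  shows "rk s n t (liftc s n x t \<beta>) = x"
  by (rule rk_dig) (use assms lift_nth in auto)

lemma lift_upd:
  assumes "j \<notin> set t" "length t = n"
  shows "liftc s n x t (\<beta>(j := c)) = (liftc s n x t \<beta>)(j := c)"
proof (rule ext)
  fix i show "liftc s n x t (\<beta>(j := c)) i = ((liftc s n x t \<beta>)(j := c)) i"
    using lift_out[OF assms, of s x] unfolding liftc_def by auto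
qed

lemma lift_ge: "\<beta> j \<le> liftc s n x t \<beta> j" unfolding liftc_def by simp

lemma Fil_submod: "is_submod s n (Fil s n i :: ('k::field) vec set)"
  unfolding Fil_def
proof (rule submod_pred)
  fix \<alpha> :: "nat \<Rightarrow> nat" and t j
  assume h: "1 \<le> \<alpha> j" "length t = n \<longrightarrow> rk s n t (\<alpha>(j := \<alpha> j - 1)) < i"
  have "rk s n t \<alpha> \<le> rk s n t (\<alpha>(j := \<alpha> j - 1))"
    unfolding rk_def by (rule sum_mono) (auto intro: mult_right_mono)
  then show "length t = n \<longrightarrow> rk s n t \<alpha> < i" using h by auto
next
  fix \<sigma> :: "nat \<Rightarrow> nat" and \<beta> u
  assume s: "finperm \<sigma>" and h: "length (map (inv \<sigma>) u) = n \<longrightarrow> rk s n (map (inv \<sigma>) u) (\<beta> \<circ> \<sigma>) < i"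
  note f = finperm_facts[OF s]
  show "length u = n \<longrightarrow> rk s n u \<beta> < i"
  proof
    assume l: "length u = n"
    have "rk s n (map (inv \<sigma>) u) (\<beta> \<circ> \<sigma>) = rk s n u \<beta>"
      unfolding rk_def by (rule sum.cong) (use l f in auto)
    then show "rk s n u \<beta> < i" using h l by simp
  qed
qed

lemma Fil_zero: "Fil s n 0 = {\<lambda>_. (0::'k::field)}"
proof
  show "Fil s n 0 \<subseteq> {\<lambda>_. (0::'k)}"
  proof
    fix v :: "'k vec" assume v: "v \<in> Fil s n 0"
    have "v p = 0" for p
    proof (rule ccontr)
      assume "v p \<noteq> 0"
      moreover obtain \<alpha> t where "p = (\<alpha>, t)" by (cases p)
      ultimately have "v (\<alpha>, t) \<noteq> 0" by simp
      moreover have vP: "v \<in> Pcarrier s n" and vG: "\<forall>\<alpha> t. v (\<alpha>, t) \<noteq> 0 \<longrightarrow> (length t = n \<longrightarrow> rk s n t \<alpha> < 0)"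
        using v unfolding Fil_def by auto
      ultimately have "valid_tuple n t" unfolding Pcarrier_def by blast
      then have "length t = n" unfolding valid_tuple_def by blast
      then show False using vG \<open>v (\<alpha>, t) \<noteq> 0\<close> by blast
    qed
    then show "v \<in> {\<lambda>_. 0}" by auto
  qed
  show "{\<lambda>_. (0::'k)} \<subseteq> Fil s n 0" using P_zero unfolding Fil_def by auto
qed

lemma Fil_top: "Fil s n ((s + 1) ^ n) = (Pcarrier s n :: ('k::field) vec set)"
proof -
  have "rk s n t \<alpha> < (s + 1) ^ n" if "valid_mono s \<alpha>" for \<alpha> t
    by (rule rk_bound) (use that in \<open>auto simp: valid_mono_def\<close>)
  then have "\<forall>\<alpha> t. v (\<alpha>, t) \<noteq> 0 \<longrightarrow> (length t = n \<longrightarrow> rk s n t \<alpha> < (s + 1) ^ n)"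
    if "v \<in> Pcarrier s n" for v :: "'k vec" using that unfolding Pcarrier_def by blast
  then show ?thesis unfolding Fil_def by blast
qed

lemma valid_mono_le:
  assumes "valid_mono s \<alpha>" "\<And>j. \<beta> j \<le> \<alpha> j"
  shows "valid_mono s \<beta>"
proof -
  have "{j. \<beta> j \<noteq> 0} \<subseteq> {j. \<alpha> j \<noteq> 0}"
  proof
    fix j assume "j \<in> {j. \<beta> j \<noteq> 0}" then show "j \<in> {j. \<alpha> j \<noteq> 0}" using assms(2)[of j] by auto
  qed
  then have "finite {j. \<beta> j \<noteq> 0}" using assms(1) unfolding valid_mono_def by (blast intro: finite_subset)
  moreover have "\<beta> 0 = 0" using assms(1) assms(2)[of 0] unfolding valid_mono_def by simp
  moreover have "\<forall>j. \<beta> j \<le> s"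
  proof
    fix j show "\<beta> j \<le> s" using assms(2)[of j] assms(1) unfolding valid_mono_def by (blast intro: le_trans)
  qed
  ultimately show ?thesis unfolding valid_mono_def by blast
qed

lemma phi_P:
  assumes "v \<in> Pcarrier s n"
  shows "phi s n x v \<in> (Pcarrier s n :: ('k::field) vec set)"
proof -
  let ?f = "\<lambda>(\<alpha>::nat\<Rightarrow>nat, t::nat list). (strip t \<alpha>, t)"
  have "{p. phi s n x v p \<noteq> 0} \<subseteq> ?f ` {p. v p \<noteq> 0}"
  proof
    fix p assume "p \<in> {p. phi s n x v p \<noteq> 0}"
    then obtain \<beta> t where p: "p = (\<beta>, t)" and h: "valid_tuple n t" "\<forall>k<n. \<beta> (t ! k) = 0"
      "v (liftc s n x t \<beta>, t) \<noteq> 0"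
      by (cases p) (auto simp: phi_def split: if_splits)
    have "?f (liftc s n x t \<beta>, t) = p" using strip_lift[of t n \<beta> s x] h p unfolding valid_tuple_def by simp
    then show "p \<in> ?f ` {p. v p \<noteq> 0}" using h by (metis (mono_tags) image_eqI mem_Collect_eq)
  qed
  then have "finite {p. phi s n x v p \<noteq> 0}"
    using assms unfolding Pcarrier_def by (auto intro: finite_subset)
  moreover have "\<forall>\<alpha> t. phi s n x v (\<alpha>, t) \<noteq> 0 \<longrightarrow> valid_mono s \<alpha> \<and> valid_tuple n t"
  proof (intro allI impI)
    fix \<beta> t assume "phi s n x v (\<beta>, t) \<noteq> 0"
    then have h: "valid_tuple n t" "v (liftc s n x t \<beta>, t) \<noteq> 0"
      by (auto simp: phi_def split: if_splits)
    then have "valid_mono s (liftc s n x t \<beta>)" using assms unfolding Pcarrier_def by blast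
    then show "valid_mono s \<beta> \<and> valid_tuple n t" using h valid_mono_le lift_ge by blast
  qed
  ultimately show ?thesis unfolding Pcarrier_def by blast
qed

lemma zero_Nsub: "(\<lambda>_. 0) \<in> (Nsub s n :: ('k::field) vec set)"
  using Nsub_eq Mset_submod unfolding is_submod_def by blast

lemma phi_lin:
  "(\<lambda>p. phi s n x (\<lambda>q. a * v q + b * w q) p - (a * phi s n x v p + b * phi s n x w p)) = (\<lambda>_. (0::'k::field))"
  by (auto simp: phi_def fun_eq_iff)

lemma diff_P:
  assumes "v \<in> Pcarrier s n" "w \<in> Pcarrier s n"
  shows "(\<lambda>p. v p - w p) \<in> (Pcarrier s n :: ('k::field) vec set)"
proof -
  have "(\<lambda>p. 1 * v p + (-1) * w p) \<in> Pcarrier s n" by (rule P_lin[OF assms])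
  then show ?thesis by simp
qed

lemma Fil_P: "v \<in> Fil s n i \<Longrightarrow> v \<in> Pcarrier s n" unfolding Fil_def by blast
lemma Fil_rk: "v \<in> Fil s n i \<Longrightarrow> v (\<alpha>, t) \<noteq> 0 \<Longrightarrow> length t = n \<Longrightarrow> rk s n t \<alpha> < i"
  unfolding Fil_def by blast
lemma P_valid: "v \<in> Pcarrier s n \<Longrightarrow> v (\<alpha>, t) \<noteq> 0 \<Longrightarrow> valid_mono s \<alpha> \<and> valid_tuple n t"
  unfolding Pcarrier_def by blast

lemma MsetI:
  assumes "v \<in> Pcarrier s n" "\<And>\<beta> t. v (\<beta>, t) \<noteq> 0 \<Longrightarrow> goodM \<beta> t"
  shows "v \<in> Mset s n"
  using assms unfolding Mset_def by blast

lemma phi_xmul: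
  fixes v :: "('k::field) vec"
  assumes v: "v \<in> Fil s n i" and j: "1 \<le> j" and x: "x = i - 1" "1 \<le> i" "i \<le> (s + 1) ^ n"
  shows "(\<lambda>p. phi s n x (xmul s j v) p - xmul s j (phi s n x v) p) \<in> Mset s n"
proof (rule MsetI)
  have vP: "v \<in> Pcarrier s n" using v by (rule Fil_P)
  show "(\<lambda>p. phi s n x (xmul s j v) p - xmul s j (phi s n x v) p) \<in> Pcarrier s n"
    by (rule diff_P[OF phi_P[OF P_xmul[OF vP j]] P_xmul[OF phi_P[OF vP] j]])
  fix \<beta> t
  assume d: "phi s n x (xmul s j v) (\<beta>, t) - xmul s j (phi s n x v) (\<beta>, t) \<noteq> 0"
  show "goodM \<beta> t"
  proof (cases "valid_tuple n t \<and> (\<forall>k<n. \<beta> (t ! k) = 0)")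
    case False
    then have "phi s n x (xmul s j v) (\<beta>, t) = 0" unfolding phi_def by (simp only: prod.case if_False)
    then have "xmul s j (phi s n x v) (\<beta>, t) \<noteq> 0" using d by simp
    then have "phi s n x v (\<beta>(j := \<beta> j - 1), t) \<noteq> 0" by (simp add: xmul_def split: if_splits)
    then have vt: "valid_tuple n t" by (simp add: phi_def split: if_splits)
    with False obtain k where k: "k < n" "\<beta> (t ! k) \<noteq> 0" by blast
    then have "t ! k \<in> set t" using vt unfolding valid_tuple_def by auto
    then show ?thesis using k unfolding goodM_def by (intro bexI[of _ "t ! k"]) auto
  next
    case True
    then have vt: "valid_tuple n t" and van: "\<forall>k<n. \<beta> (t ! k) = 0" by auto
    have lt: "length t = n" and dt: "distinct t" using vt unfolding valid_tuple_def by auto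
    define L where "L = liftc s n x t \<beta>"
    have A: "phi s n x (xmul s j v) (\<beta>, t) = xmul s j v (L, t)" using True by (simp add: phi_def L_def)
    have False
    proof (cases "j \<in> set t")
      case True
      then obtain k0 where k0: "k0 < n" "j = t ! k0" using lt by (auto simp: in_set_conv_nth)
      have bj: "\<beta> j = 0" using van k0 by simp
      have B: "xmul s j (phi s n x v) (\<beta>, t) = 0" using bj by (simp add: xmul_def)
      have "xmul s j v (L, t) \<noteq> 0" using d A B by simp
      then have h: "1 \<le> L j" "L j \<le> s" "v (L(j := L j - 1), t) \<noteq> 0"
        by (auto simp: xmul_def split: if_splits)
      have r1: "rk s n t (L(j := L j - 1)) < i" using Fil_rk[OF v h(3) lt] .
      have r2: "rk s n t L = x" unfolding L_def by (rule rk_lift) (use dt lt van x in auto)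
      have "rk s n t L < rk s n t (L(j := L j - 1))"
        unfolding rk_def
      proof (rule sum_strict_mono_ex1)
        show "\<forall>k\<in>{..<n}. (s - L (t ! k)) * (s + 1) ^ k \<le> (s - (L(j := L j - 1)) (t ! k)) * (s + 1) ^ k"
          by (auto intro: mult_right_mono)
        have "s - L j < s - (L j - 1)" using h by simp
        then have "(s - L (t ! k0)) * (s + 1) ^ k0 < (s - (L(j := L j - 1)) (t ! k0)) * (s + 1) ^ k0"
          using k0 by simp
        then show "\<exists>k\<in>{..<n}. (s - L (t ! k)) * (s + 1) ^ k < (s - (L(j := L j - 1)) (t ! k)) * (s + 1) ^ k"
          using k0 by blast
      qed simp
      then show False using r1 r2 x by simp
    next
      case False
      have Lj: "L j = \<beta> j" unfolding L_def by (rule lift_out[OF False lt])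
      have van': "\<forall>k<n. (\<beta>(j := \<beta> j - 1)) (t ! k) = 0"
        using van False lt by (auto simp: in_set_conv_nth)
      have up: "liftc s n x t (\<beta>(j := \<beta> j - 1)) = L(j := \<beta> j - 1)"
        unfolding L_def by (rule lift_upd[OF False lt])
      have "xmul s j (phi s n x v) (\<beta>, t) = xmul s j v (L, t)"
        using van' vt up Lj by (simp add: xmul_def phi_def)
      then show False using d A by simp
    qed
    then show ?thesis ..
  qed
qed

lemma phi_pact:
  fixes v :: "('k::field) vec"
  assumes s: "finperm \<sigma>"
  shows "phi s n x (pact \<sigma> v) = pact \<sigma> (phi s n x v)"
proof (rule ext)
  fix p :: "(nat \<Rightarrow> nat) \<times> nat list"
  obtain \<beta> u where p: "p = (\<beta>, u)" by (cases p)
  note f = finperm_facts[OF s]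
  have bs: "bij \<sigma>" using s unfolding finperm_def by blast
  have vt_iff: "valid_tuple n (map (inv \<sigma>) u) \<longleftrightarrow> valid_tuple n u"
  proof
    assume "valid_tuple n (map (inv \<sigma>) u)" then show "valid_tuple n u" by (rule valid_tuple_perm[OF s])
  next
    assume vu: "valid_tuple n u"
    have "inj_on (inv \<sigma>) (set u)" using bij_is_inj[OF bij_imp_bij_inv[OF bs]] by (simp add: inj_on_def)
    moreover have "0 \<notin> set (map (inv \<sigma>) u)"
    proof
      assume "0 \<in> set (map (inv \<sigma>) u)"
      then obtain y where "y \<in> set u" "inv \<sigma> y = 0" by auto
      then have "y = 0" using f(1)[of y] f(3) by simp
      then show False using vu \<open>y \<in> set u\<close> unfolding valid_tuple_def by simp
    qed
    ultimately show "valid_tuple n (map (inv \<sigma>) u)" using vu unfolding valid_tuple_def by (simp add: distinct_map)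
  qed
  show "phi s n x (pact \<sigma> v) p = pact \<sigma> (phi s n x v) p"
  proof (cases "valid_tuple n u")
    case False
    then show ?thesis using vt_iff unfolding p phi_def pact_def by simp
  next
    case True
    then have lu: "length u = n" unfolding valid_tuple_def by simp
    have van_iff: "(\<forall>k<n. (\<beta> \<circ> \<sigma>) (map (inv \<sigma>) u ! k) = 0) \<longleftrightarrow> (\<forall>k<n. \<beta> (u ! k) = 0)"
      using lu f(1) by simp
    have lift_eq: "liftc s n x (map (inv \<sigma>) u) (\<beta> \<circ> \<sigma>) = liftc s n x u \<beta> \<circ> \<sigma>"
    proof (rule ext)
      fix j
      have "(\<Sum>k<n. if map (inv \<sigma>) u ! k = j then dig s x k else 0) = (\<Sum>k<n. if u ! k = \<sigma> j then dig s x k else 0)"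
      proof (rule sum.cong)
        fix k assume "k \<in> {..<n}"
        then have "map (inv \<sigma>) u ! k = inv \<sigma> (u ! k)" using lu by simp
        moreover have "inv \<sigma> (u ! k) = j \<longleftrightarrow> u ! k = \<sigma> j" using f(1) f(2) by metis
        ultimately show "(if map (inv \<sigma>) u ! k = j then dig s x k else 0) = (if u ! k = \<sigma> j then dig s x k else 0)"
          by simp
      qed simp
      then show "liftc s n x (map (inv \<sigma>) u) (\<beta> \<circ> \<sigma>) j = (liftc s n x u \<beta> \<circ> \<sigma>) j"
        unfolding liftc_def by simp
    qed
    show ?thesis using vt_iff van_iff lift_eq True unfolding p phi_def pact_def by (simp only: prod.case comp_apply)
  qed
qed

lemma phi_surj:
  fixes u :: "('k::field) vec"
  assumes u: "u \<in> Pcarrier s n" and x: "x = i - 1" "1 \<le> i" "i \<le> (s + 1) ^ n"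
  shows "\<exists>v\<in>Fil s n i. (\<lambda>p. phi s n x v p - u p) \<in> Mset s n"
proof -
  define v :: "'k vec" where "v = (\<lambda>(\<alpha>, t). if valid_tuple n t \<and> (\<forall>k<n. \<alpha> (t ! k) = dig s x k) then u (strip t \<alpha>, t) else 0)"
  have xb: "x < (s + 1) ^ n" using x by simp
  have vnz: "valid_tuple n t \<and> (\<forall>k<n. \<alpha> (t ! k) = dig s x k) \<and> u (strip t \<alpha>, t) \<noteq> 0" if "v (\<alpha>, t) \<noteq> 0" for \<alpha> t
    using that unfolding v_def by (simp split: if_splits)
  let ?f = "\<lambda>(\<beta>::nat\<Rightarrow>nat, t::nat list). (liftc s n x t \<beta>, t)"
  have "{p. v p \<noteq> 0} \<subseteq> ?f ` {p. u p \<noteq> 0}"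
  proof
    fix p assume "p \<in> {p. v p \<noteq> 0}"
    then obtain \<alpha> t where p: "p = (\<alpha>, t)" and h: "v (\<alpha>, t) \<noteq> 0" by (cases p) auto
    note hh = vnz[OF h]
    have "?f (strip t \<alpha>, t) = p" using lift_strip[of t n \<alpha> s x] hh p unfolding valid_tuple_def by simp
    then show "p \<in> ?f ` {p. u p \<noteq> 0}" using hh by (metis (mono_tags) image_eqI mem_Collect_eq)
  qed
  then have fin: "finite {p. v p \<noteq> 0}"
    using u unfolding Pcarrier_def by (auto intro: finite_subset)
  have valid: "valid_mono s \<alpha> \<and> valid_tuple n t" if "v (\<alpha>, t) \<noteq> 0" for \<alpha> t
  proof -
    note hh = vnz[OF that]
    have vs: "valid_mono s (strip t \<alpha>)" using P_valid[OF u] hh by blast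
    have lt: "length t = n" and z: "0 \<notin> set t" using hh unfolding valid_tuple_def by auto
    have sub: "{j. \<alpha> j \<noteq> 0} \<subseteq> {j. strip t \<alpha> j \<noteq> 0} \<union> set t" unfolding strip_def by auto
    have f1: "finite {j. \<alpha> j \<noteq> 0}"
      by (rule finite_subset[OF sub]) (use vs in \<open>simp add: valid_mono_def\<close>)
    have f2: "\<alpha> 0 = 0" using vs z unfolding valid_mono_def strip_def by simp
    have f3: "\<alpha> j \<le> s" for j
    proof (cases "j \<in> set t")
      case True
      then obtain k where "k < n" "j = t ! k" using lt by (auto simp: in_set_conv_nth)
      then show ?thesis using hh dig_le by simp
    next
      case False
      then have "\<alpha> j = strip t \<alpha> j" unfolding strip_def by simp
      then show ?thesis using vs unfolding valid_mono_def by simp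
    qed
    show ?thesis using f1 f2 f3 hh unfolding valid_mono_def by blast
  qed
  have vP: "v \<in> Pcarrier s n" using fin valid unfolding Pcarrier_def by blast
  have vF: "v \<in> Fil s n i"
  proof -
    have "rk s n t \<alpha> < i" if "v (\<alpha>, t) \<noteq> 0" for \<alpha> t
      using rk_dig[of n \<alpha> t s x] vnz[OF that] xb x by simp
    then show ?thesis using vP unfolding Fil_def by blast
  qed
  have "(\<lambda>p. phi s n x v p - u p) \<in> Mset s n"
  proof (rule MsetI)
    show "(\<lambda>p. phi s n x v p - u p) \<in> Pcarrier s n" by (rule diff_P[OF phi_P[OF vP] u])
    fix \<beta> t assume d: "phi s n x v (\<beta>, t) - u (\<beta>, t) \<noteq> 0"
    show "goodM \<beta> t"
    proof (cases "valid_tuple n t \<and> (\<forall>k<n. \<beta> (t ! k) = 0)")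
      case True
      then have lt: "length t = n" and dt: "distinct t" unfolding valid_tuple_def by auto
      have "\<forall>k<n. liftc s n x t \<beta> (t ! k) = dig s x k" using lift_nth[OF dt lt] True by simp
      then have "phi s n x v (\<beta>, t) = u (\<beta>, t)"
        using True strip_lift[OF lt, of \<beta> s x] unfolding phi_def v_def by simp
      then show ?thesis using d by simp
    next
      case False
      then have "phi s n x v (\<beta>, t) = 0" unfolding phi_def by (simp only: prod.case if_False)
      then have "u (\<beta>, t) \<noteq> 0" using d by simp
      then have vt: "valid_tuple n t" using P_valid[OF u] by blast
      with False obtain k where k: "k < n" "\<beta> (t ! k) \<noteq> 0" by blast
      then have "t ! k \<in> set t" using vt unfolding valid_tuple_def by auto
      then show ?thesis using k unfolding goodM_def by (intro bexI[of _ "t ! k"]) auto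
    qed
  qed
  then show ?thesis using vF by blast
qed

lemma phi_ker:
  fixes v :: "('k::field) vec"
  assumes v: "v \<in> Fil s n i" and x: "x = i - 1" "1 \<le> i" "i \<le> (s + 1) ^ n"
  shows "phi s n x v \<in> Mset s n \<longleftrightarrow> v \<in> Fil s n (i - 1)"
proof
  have xb: "x < (s + 1) ^ n" using x by simp
  have vP: "v \<in> Pcarrier s n" using v by (rule Fil_P)
  assume "v \<in> Fil s n (i - 1)"
  then have "phi s n x v = (\<lambda>_. 0)"
  proof -
    assume v1: "v \<in> Fil s n (i - 1)"
    have "phi s n x v p = 0" for p
    proof (rule ccontr)
      assume nz: "phi s n x v p \<noteq> 0"
      obtain \<beta> t where p: "p = (\<beta>, t)" by (cases p)
      have h: "valid_tuple n t" "\<forall>k<n. \<beta> (t ! k) = 0" "v (liftc s n x t \<beta>, t) \<noteq> 0"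
        using nz unfolding p phi_def by (simp_all split: if_splits)
      have lt: "length t = n" and dt: "distinct t" using h unfolding valid_tuple_def by auto
      have "rk s n t (liftc s n x t \<beta>) < i - 1" using Fil_rk[OF v1 h(3) lt] .
      moreover have "rk s n t (liftc s n x t \<beta>) = x" by (rule rk_lift[OF dt lt h(2) xb])
      ultimately show False using x by simp
    qed
    then show ?thesis by auto
  qed
  then show "phi s n x v \<in> Mset s n" using Mset_submod unfolding is_submod_def by metis
next
  have xb: "x < (s + 1) ^ n" using x by simp
  have vP: "v \<in> Pcarrier s n" using v by (rule Fil_P)
  assume M: "phi s n x v \<in> Mset s n"
  have "rk s n t \<alpha> < i - 1" if nz: "v (\<alpha>, t) \<noteq> 0" and lt: "length t = n" for \<alpha> t
  proof (rule ccontr)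
    assume "\<not> rk s n t \<alpha> < i - 1"
    moreover have "rk s n t \<alpha> < i" using Fil_rk[OF v nz lt] .
    ultimately have r: "rk s n t \<alpha> = x" using x by simp
    have vv: "valid_mono s \<alpha> \<and> valid_tuple n t" using P_valid[OF vP nz] .
    then have dt: "distinct t" unfolding valid_tuple_def by simp
    have "\<forall>k<n. \<alpha> (t ! k) \<le> s" using vv unfolding valid_mono_def by blast
    then have dg: "\<forall>k<n. \<alpha> (t ! k) = dig s x k" using rk_digits r by blast
    define \<beta> where "\<beta> = strip t \<alpha>"
    have van: "\<forall>k<n. \<beta> (t ! k) = 0" unfolding \<beta>_def strip_def using lt by simp
    have "liftc s n x t \<beta> = \<alpha>" unfolding \<beta>_def by (rule lift_strip[OF dt lt dg])
    then have "phi s n x v (\<beta>, t) \<noteq> 0" using vv van nz unfolding phi_def by simp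
    then have "goodM \<beta> t" using M unfolding Mset_def by blast
    then show False unfolding goodM_def \<beta>_def strip_def by simp
  qed
  then show "v \<in> Fil s n (i - 1)" using vP unfolding Fil_def by blast
qed

theorem proposition4p9:
  fixes s n :: nat
  shows "\<exists>F :: nat \<Rightarrow> ('k::field) vec set.
    F 0 = {\<lambda>_. 0} \<and> F ((s + 1) ^ n) = Pcarrier s n \<and>
    (\<forall>i \<le> (s + 1) ^ n. is_submod s n (F i)) \<and>
    (\<forall>i. 1 \<le> i \<and> i \<le> (s + 1) ^ n \<longrightarrow> F (i - 1) \<subseteq> F i \<and> iso_to_Q s n (F i) (F (i - 1)))"
proof (intro exI[of _ "Fil s n"] conjI allI impI)
  show "Fil s n 0 = {\<lambda>_. (0::'k)}" by (rule Fil_zero)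
  show "Fil s n ((s + 1) ^ n) = (Pcarrier s n :: 'k vec set)" by (rule Fil_top)
  fix i :: nat
  show "is_submod s n (Fil s n i :: 'k vec set)" by (rule Fil_submod)
next
  fix i :: nat
  assume i: "1 \<le> i \<and> i \<le> (s + 1) ^ n"
  show "(Fil s n (i - 1) :: 'k vec set) \<subseteq> Fil s n i" unfolding Fil_def by fastforce
  define x where "x = i - 1"
  have x: "x = i - 1" "1 \<le> i" "i \<le> (s + 1) ^ n" using i x_def by auto
  show "iso_to_Q s n (Fil s n i :: 'k vec set) (Fil s n (i - 1))"
    unfolding iso_to_Q_def
  proof (intro exI[of _ "phi s n x"] conjI ballI allI impI)
    fix v :: "'k vec" assume v: "v \<in> Fil s n i"
    show "phi s n x v \<in> Pcarrier s n" by (rule phi_P[OF Fil_P[OF v]])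
    show "phi s n x v \<in> Nsub s n \<longleftrightarrow> v \<in> Fil s n (i - 1)"
      using phi_ker[OF v x] Nsub_eq by blast
  next
    fix v w :: "'k vec" and a b :: 'k
    show "(\<lambda>p. phi s n x (\<lambda>q. a * v q + b * w q) p - (a * phi s n x v p + b * phi s n x w p)) \<in> Nsub s n"
      unfolding phi_lin by (rule zero_Nsub)
  next
    fix j :: nat and v :: "'k vec" assume "1 \<le> j" "v \<in> Fil s n i"
    then show "(\<lambda>p. phi s n x (xmul s j v) p - xmul s j (phi s n x v) p) \<in> Nsub s n"
      using phi_xmul[OF _ _ x] Nsub_eq by blast
  next
    fix \<sigma> :: "nat \<Rightarrow> nat" and v :: "'k vec" assume "finperm \<sigma>" "v \<in> Fil s n i"
    then have "(\<lambda>p. phi s n x (pact \<sigma> v) p - pact \<sigma> (phi s n x v) p) = (\<lambda>_. 0)"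
      using phi_pact[of \<sigma> s n x v] by simp
    then show "(\<lambda>p. phi s n x (pact \<sigma> v) p - pact \<sigma> (phi s n x v) p) \<in> Nsub s n"
      using zero_Nsub by simp
  next
    fix u :: "'k vec" assume "u \<in> Pcarrier s n"
    then show "\<exists>v\<in>Fil s n i. (\<lambda>p. phi s n x v p - u p) \<in> Nsub s n"
      using phi_surj[OF _ x] Nsub_eq by blast
  qed
qed

end
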